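(* Let $a\neq0$ and let $\varepsilon$ satisfy $0<\varepsilon<\sqrt{2}$, $\varepsilon|a|<1$, $\varepsilon^{2}+4a^{2}>4$. Let $$\omega_{1,2}=\frac{1}{\sqrt{2}}\Big(2-\varepsilon^{2}\pm\varepsilon\sqrt{\varepsilon^{2}-4+4a^{2}}\Big)^{1/2},\qquad \omega_1>\omega_2>0,$$ and suppose that there is $\tau>0$ such that both $\pm i\omega_1$ and $\pm i\omega_2$ are roots of $\lambda^{2}-\varepsilon\lambda-\varepsilon a e^{-\lambda\tau}+1=0$ for this same $\tau$. Then $k\omega_1\neq l\omega_2$ for all integers $k,l$ with $1\le |k|+|l|\le 4$.
   Context: Equivalently, $\pm i\omega$ is a root of the characteristic equation for given $(\varepsilon,\tau)$ iff $\omega=a\sin(\omega\tau)$ and $1-\omega^{2}=\varepsilon a\cos(\omega\tau)$. This equation is the characteristic equation at $x=0$ of the delayed van der Pol oscillator $\ddot{x}+\varepsilon(x^{2}-1)\dot{x}+x=\varepsilon f(x(t-\tau))$ with $f(0)=f''(0)=0$, $f'(0)=a$. *)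

theory Defs
  imports Complex_Main
begin

text \<open>Characteristic function of the linearised delayed van der Pol oscillator at x = 0:
  lambda^2 - eps*lambda - eps*a*exp(-lambda*tau) + 1.\<close>
definition char_fun :: "real \<Rightarrow> real \<Rightarrow> real \<Rightarrow> complex \<Rightarrow> complex" where
  "char_fun eps a tau lam =
     lam\<^sup>2 - complex_of_real eps * lam
       - complex_of_real (eps * a) * exp (- lam * complex_of_real tau) + 1"

definition omega1 :: "real \<Rightarrow> real \<Rightarrow> real" where
  "omega1 eps a = (1 / sqrt 2) * sqrt (2 - eps\<^sup>2 + eps * sqrt (eps\<^sup>2 - 4 + 4 * a\<^sup>2))"

definition omega2 :: "real \<Rightarrow> real \<Rightarrow> real" where
  "omega2 eps a = (1 / sqrt 2) * sqrt (2 - eps\<^sup>2 - eps * sqrt (eps\<^sup>2 - 4 + 4 * a\<^sup>2))"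

end

theory Submission
  imports Defs
begin

lemma im_root:
  assumes "char_fun eps a tau (\<i> * complex_of_real w) = 0" and "eps > 0"
  shows "w = a * sin (w * tau)"
proof -
  have e: "exp (- (\<i> * complex_of_real w) * complex_of_real tau)
          = complex_of_real (cos (w*tau)) - \<i> * complex_of_real (sin (w*tau))"
  proof -
    have "- (\<i> * complex_of_real w) * complex_of_real tau = \<i> * complex_of_real (-(w*tau))"
      by simp
    then show ?thesis by (simp add: complex_eq_iff Re_exp Im_exp)
  qed
  have "Im (char_fun eps a tau (\<i> * complex_of_real w)) = 0" using assms(1) by simp
  then have "- eps * w + eps * a * sin (w*tau) = 0"
    unfolding char_fun_def e by (simp add: power2_eq_square)
  moreover have "eps * (w - a * sin (w*tau)) = - (- eps * w + eps * a * sin (w*tau))"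
    by (simp add: algebra_simps)
  ultimately have "eps * (w - a * sin (w*tau)) = 0" by linarith
  then have "w - a * sin (w*tau) = 0" using assms(2) by simp
  then show ?thesis by linarith
qed

lemma sin3: "sin (3*(x::real)) = sin x * (3 - 4 * (sin x)^2)"
proof -
  have "sin (3*x) = sin (2*x + x)" by simp
  also have "... = sin (2*x) * cos x + cos (2*x) * sin x" by (rule sin_add)
  also have "... = sin x * (3 - 4 * (sin x)^2)"
  proof -
    have a1: "sin (2*x) = 2 * sin x * cos x" by (rule sin_double)
    have a2: "cos (2*x) = 1 - 2 * (sin x)^2" by (rule cos_double_sin)
    have a3: "(cos x)^2 = 1 - (sin x)^2" by (rule cos_squared_eq)
    show ?thesis unfolding a1 a2 proof -
      have "sin x * (cos x)^2 = sin x * (1 - (sin x)^2)" using a3 by simp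
      then show "2 * sin x * cos x * cos x + (1 - 2 * (sin x)^2) * sin x = sin x * (3 - 4 * (sin x)^2)"
        by (simp add: power2_eq_square algebra_simps)
    qed
  qed
  finally show ?thesis .
qed

theorem lemma2:
  fixes eps a tau :: real
  assumes "a \<noteq> 0"
    and "0 < eps" and "eps < sqrt 2"
    and "eps * \<bar>a\<bar> < 1"
    and "eps\<^sup>2 + 4 * a\<^sup>2 > 4"
    and "omega1 eps a > omega2 eps a" and "omega2 eps a > 0"
    and "tau > 0"
    and "char_fun eps a tau (\<i> * complex_of_real (omega1 eps a)) = 0"
    and "char_fun eps a tau (- \<i> * complex_of_real (omega1 eps a)) = 0"
    and "char_fun eps a tau (\<i> * complex_of_real (omega2 eps a)) = 0"
    and "char_fun eps a tau (- \<i> * complex_of_real (omega2 eps a)) = 0"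
  shows "\<forall>k l :: int. 1 \<le> \<bar>k\<bar> + \<bar>l\<bar> \<and> \<bar>k\<bar> + \<bar>l\<bar> \<le> 4 \<longrightarrow>
           real_of_int k * omega1 eps a \<noteq> real_of_int l * omega2 eps a"
proof -
  define w1 where "w1 = omega1 eps a"
  define w2 where "w2 = omega2 eps a"
  define t where "t = w2 * tau"
  have h1: "w1 = a * sin (w1 * tau)" using im_root[OF assms(9) assms(2)] w1_def by simp
  have h2: "w2 = a * sin t" using im_root[OF assms(11) assms(2)] w2_def t_def by simp
  have p: "w2 > 0" "w1 > w2" using assms(6,7) w1_def w2_def by auto
  have n2: "w1 \<noteq> 2 * w2"
  proof
    assume E: "w1 = 2 * w2"
    then have "w1 * tau = 2 * t" using t_def by simp
    then have "w1 = 2 * w2 * cos t" using h1 h2 by (simp add: sin_double)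
    then have c: "cos t = 1" using E p by simp
    then have "sin t = 0" using sin_cos_squared_add[of t] by simp
    then show False using h2 p by simp
  qed
  have n3: "w1 \<noteq> 3 * w2"
  proof
    assume E: "w1 = 3 * w2"
    then have "w1 * tau = 3 * t" using t_def by simp
    then have "w1 = w2 * (3 - 4 * (sin t)^2)" using h1 h2 by (simp add: sin3)
    then have "(sin t)^2 = 0" using E p by simp
    then have "sin t = 0" by simp
    then show False using h2 p by simp
  qed
  show ?thesis unfolding w1_def[symmetric] w2_def[symmetric]
  proof (intro allI impI)
    fix k l :: int
    assume r: "1 \<le> \<bar>k\<bar> + \<bar>l\<bar> \<and> \<bar>k\<bar> + \<bar>l\<bar> \<le> 4"
    then have "k \<in> {-4..4}" "l \<in> {-4..4}" by auto
    then have kk: "k \<in> {-4,-3,-2,-1,0,1,2,3,4}" "l \<in> {-4,-3,-2,-1,0,1,2,3,4}"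
      by (auto simp: atLeastAtMost_iff) 
    show "real_of_int k * w1 \<noteq> real_of_int l * w2"
      using kk r p n2 n3 by auto
  qed
qed

end
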